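(* Let $F$ be an infinite field, $n=3$, and let $f,g\in\mathcal{B}_{(1,1)}$ with $f\le_{\mathcal{B}_{(1,1)}}g$. Then $g\in\langle\{f\}\cup I\rangle_{T_{\mathbb{Z}_3}}$.
   Context: $I$ is the $T_{\mathbb{Z}_3}$-ideal of graded identities of $UT_3(F)^{(-)}$ ($3\times3$ upper triangular matrices, bracket $[a,b]=ab-ba$, canonical grading with degree-$k$ component spanned by $e_{ij}$, $j-i=k$) in the free Lie algebra on variables $y_i$ (degree $0$), $z_i$ (degree $1$), $w_i$ (degree $2$). Commutators are left normed. $z_1,z_2$ are fixed distinct variables of degree $1$. $[z_1,a_1y_1,\dots,a_ny_n,z_2,b_1y_1,\dots,b_ny_n]$ denotes the commutator with $z_1$, then $y_1$ repeated $a_1$ times, …, $y_n$ repeated $a_n$ times, then $z_2$, then $y_1$ repeated $b_1$ times, …, $y_n$ repeated $b_n$ times. $\mathcal{B}_{(1,1)}$ is the set of all such commutators with $n\ge0$, $a_i,b_i\ge0$. For such $f$, $V_f=((a_1,b_1),\dots,(a_n,b_n))$. For $f,g\in\mathcal{B}_{(1,1)}$ with $V_f=((a_1,b_1),\dots,(a_n,b_n))$, $V_g=((a'_1,b'_1),\dots,(a'_m,b'_m))$, $f\le_{\mathcal{B}_{(1,1)}}g$ means there is a strictly increasing $\varphi:\{1,\dots,n\}\to\{1,\dots,m\}$ with $a_i\le a'_{\varphi(i)}$ and $b_i\le b'_{\varphi(i)}$ for all $i$. *)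

theory Defs
  imports Main
begin

datatype var = Y nat | Z nat | W nat

fun vdeg :: "var \<Rightarrow> nat" where
  "vdeg (Y _) = 0" | "vdeg (Z _) = 1" | "vdeg (W _) = 2"

definition wdeg :: "var list \<Rightarrow> nat" where
  "wdeg u = (sum_list (map vdeg u)) mod 3"

text \<open>Noncommutative polynomials: coefficient functions on words (finite support
  is automatic for the elements we generate).\<close>
type_synonym 'a npoly = "var list \<Rightarrow> 'a"

definition pvar :: "var \<Rightarrow> 'a::field npoly" where
  "pvar x = (\<lambda>w. if w = [x] then 1 else 0)"

definition pone :: "'a::field npoly" where
  "pone = (\<lambda>w. if w = [] then 1 else 0)"

definition pzero :: "'a::field npoly" where
  "pzero = (\<lambda>w. 0)"

definition padd :: "'a::field npoly \<Rightarrow> 'a npoly \<Rightarrow> 'a npoly" where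
  "padd p q = (\<lambda>w. p w + q w)"

definition psmult :: "'a::field \<Rightarrow> 'a npoly \<Rightarrow> 'a npoly" where
  "psmult c p = (\<lambda>w. c * p w)"

definition pmult :: "'a::field npoly \<Rightarrow> 'a npoly \<Rightarrow> 'a npoly" where
  "pmult p q = (\<lambda>w. \<Sum>k\<le>length w. p (take k w) * q (drop k w))"

definition pbr :: "'a::field npoly \<Rightarrow> 'a npoly \<Rightarrow> 'a npoly" where
  "pbr p q = (\<lambda>w. pmult p q w - pmult q p w)"

text \<open>The free Lie algebra L(X): the Lie subalgebra of F<X> generated by the variables.\<close>
inductive_set lie_polys :: "'a::field npoly set" where
  lp_var: "pvar x \<in> lie_polys"
| lp_zero: "pzero \<in> lie_polys"
| lp_add: "p \<in> lie_polys \<Longrightarrow> q \<in> lie_polys \<Longrightarrow> padd p q \<in> lie_polys"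
| lp_smult: "p \<in> lie_polys \<Longrightarrow> psmult c p \<in> lie_polys"
| lp_br: "p \<in> lie_polys \<Longrightarrow> q \<in> lie_polys \<Longrightarrow> pbr p q \<in> lie_polys"

definition homog :: "nat \<Rightarrow> 'a::field npoly \<Rightarrow> bool" where
  "homog d p \<longleftrightarrow> (\<forall>u. p u \<noteq> 0 \<longrightarrow> wdeg u = d)"

definition wprod :: "(var \<Rightarrow> 'a::field npoly) \<Rightarrow> var list \<Rightarrow> 'a npoly" where
  "wprod \<sigma> u = foldr (\<lambda>x acc. pmult (\<sigma> x) acc) u pone"

definition psubst :: "(var \<Rightarrow> 'a::field npoly) \<Rightarrow> 'a npoly \<Rightarrow> 'a npoly" where
  "psubst \<sigma> p = (\<lambda>w. \<Sum>u | p u \<noteq> 0. p u * wprod \<sigma> u w)"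

definition graded_endo :: "(var \<Rightarrow> 'a::field npoly) \<Rightarrow> bool" where
  "graded_endo \<sigma> \<longleftrightarrow> (\<forall>x. \<sigma> x \<in> lie_polys \<and> homog (vdeg x) (\<sigma> x))"

inductive_set tideal :: "'a::field npoly set \<Rightarrow> 'a npoly set" for S where
  ti_gen: "s \<in> S \<Longrightarrow> s \<in> tideal S"
| ti_zero: "pzero \<in> tideal S"
| ti_add: "p \<in> tideal S \<Longrightarrow> q \<in> tideal S \<Longrightarrow> padd p q \<in> tideal S"
| ti_smult: "p \<in> tideal S \<Longrightarrow> psmult c p \<in> tideal S"
| ti_br: "p \<in> tideal S \<Longrightarrow> q \<in> lie_polys \<Longrightarrow> pbr p q \<in> tideal S"
| ti_subst: "p \<in> tideal S \<Longrightarrow> graded_endo \<sigma> \<Longrightarrow> psubst \<sigma> p \<in> tideal S"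

text \<open>3x3 matrices as functions on indices 0,1,2.\<close>
type_synonym 'a mat3 = "nat \<Rightarrow> nat \<Rightarrow> 'a"

definition mmult :: "'a::field mat3 \<Rightarrow> 'a mat3 \<Rightarrow> 'a mat3" where
  "mmult A B = (\<lambda>i j. \<Sum>k<3. A i k * B k j)"

definition mone :: "'a::field mat3" where
  "mone = (\<lambda>i j. if i = j \<and> i < 3 then 1 else 0)"

definition ut3_comp :: "nat \<Rightarrow> 'a::field mat3 \<Rightarrow> bool" where
  "ut3_comp d A \<longleftrightarrow> (\<forall>i j. A i j \<noteq> 0 \<longrightarrow> i < 3 \<and> j < 3 \<and> j = i + d)"

definition graded_eval :: "(var \<Rightarrow> 'a::field mat3) \<Rightarrow> bool" where
  "graded_eval \<rho> \<longleftrightarrow> (\<forall>x. ut3_comp (vdeg x) (\<rho> x))"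

text \<open>Evaluation; for Lie polynomials this is the Lie evaluation in UT_3^(-).\<close>
definition peval :: "(var \<Rightarrow> 'a::field mat3) \<Rightarrow> 'a npoly \<Rightarrow> 'a mat3" where
  "peval \<rho> p = (\<lambda>i j. \<Sum>u | p u \<noteq> 0.
      p u * (foldr (\<lambda>x acc. mmult (\<rho> x) acc) u mone) i j)"

definition ut3_ids :: "'a::field npoly set" where
  "ut3_ids = {p \<in> lie_polys. \<forall>\<rho>. graded_eval \<rho> \<longrightarrow> peval \<rho> p = (\<lambda>i j. 0)}"

fun lnorm :: "'a::field npoly \<Rightarrow> var list \<Rightarrow> 'a npoly" where
  "lnorm p [] = p"
| "lnorm p (x # xs) = lnorm (pbr p (pvar x)) xs"

text \<open>For V = ((a_1,b_1),...,(a_n,b_n)) (list index i corresponds to y_(i+1)):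
  [z1, a_1 y_1, ..., a_n y_n, z2, b_1 y_1, ..., b_n y_n].\<close>
definition ys_block :: "nat list \<Rightarrow> var list" where
  "ys_block as = concat (map (\<lambda>i. replicate (as ! i) (Y (Suc i))) [0..<length as])"

definition bcomm :: "var \<Rightarrow> var \<Rightarrow> (nat \<times> nat) list \<Rightarrow> 'a::field npoly" where
  "bcomm z1 z2 V = lnorm (pvar z1) (ys_block (map fst V) @ [z2] @ ys_block (map snd V))"

definition ble :: "(nat \<times> nat) list \<Rightarrow> (nat \<times> nat) list \<Rightarrow> bool" where
  "ble V V' \<longleftrightarrow> (\<exists>\<phi>. strict_mono_on {..<length V} \<phi> \<and>
      (\<forall>i<length V. \<phi> i < length V' \<and>
         fst (V ! i) \<le> fst (V' ! \<phi> i) \<and> snd (V ! i) \<le> snd (V' ! \<phi> i)))"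

end

theory Submission
  imports Defs "HOL-Library.Multiset"
begin

definition psub :: "'a::field npoly \<Rightarrow> 'a npoly \<Rightarrow> 'a npoly" where
  "psub p q = (\<lambda>w. p w - q w)"

definition dl :: "var list \<Rightarrow> 'a::field npoly" where
  "dl u = (\<lambda>w. if w = u then 1 else 0)"

lemma pmult_Nil: "pmult p q [] = p [] * q []"
  by (simp add: pmult_def)

lemma pmult_Cons: "pmult p q (x#w) = p [] * q (x#w) + pmult (\<lambda>u. p (x#u)) q w"
  unfolding pmult_def length_Cons sum.atMost_Suc_shift by simp

lemma pmult_lin_left: "pmult (\<lambda>u. c * f u + g u) r w = c * pmult f r w + pmult g r w"
  by (simp add: pmult_def sum.distrib sum_distrib_left algebra_simps)

lemma pmult_assoc: "pmult (pmult p q) r = pmult p (pmult q r)"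
proof
  fix w show "pmult (pmult p q) r w = pmult p (pmult q r) w"
  proof (induction w arbitrary: p q)
    case Nil then show ?case by (simp add: pmult_Nil)
  next
    case (Cons x w)
    have e: "(\<lambda>u. pmult p q (x#u)) = (\<lambda>u. p [] * q (x#u) + pmult (\<lambda>u. p (x#u)) q u)"
      by (simp add: pmult_Cons)
    have "pmult (pmult p q) r (x#w) = p [] * q [] * r (x#w) + (p [] * pmult (\<lambda>u. q (x#u)) r w
         + pmult (pmult (\<lambda>u. p (x#u)) q) r w)"
      by (simp add: pmult_Cons e pmult_lin_left pmult_Nil)
    also have "\<dots> = pmult p (pmult q r) (x#w)"
      by (simp add: pmult_Cons pmult_Nil Cons algebra_simps)
    finally show ?case .
  qed
qed

lemma pmult_diff_left: "pmult (\<lambda>u. f u - g u) r w = pmult f r w - pmult g r w"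
  by (simp add: pmult_def sum_subtractf algebra_simps)
lemma pmult_diff_right: "pmult r (\<lambda>u. f u - g u) w = pmult r f w - pmult r g w"
  by (simp add: pmult_def sum_subtractf algebra_simps)
lemma pmult_smult_left: "pmult (\<lambda>u. c * f u) r w = c * pmult f r w"
  by (simp add: pmult_def sum_distrib_left algebra_simps)
lemma pmult_smult_right: "pmult r (\<lambda>u. c * f u) w = c * pmult r f w"
  by (simp add: pmult_def sum_distrib_left algebra_simps)
lemma pmult_add_left: "pmult (\<lambda>u. f u + g u) r w = pmult f r w + pmult g r w"
  by (simp add: pmult_def sum.distrib algebra_simps)
lemma pmult_add_right: "pmult r (\<lambda>u. f u + g u) w = pmult r f w + pmult r g w"
  by (simp add: pmult_def sum.distrib algebra_simps)

lemma jacobi: "psub (pbr (pbr P a) b) (pbr (pbr P b) a) = pbr P (pbr a b)"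
  unfolding psub_def pbr_def
  by (rule ext) (simp add: pmult_diff_left pmult_diff_right pmult_assoc algebra_simps)

lemma pbr_psub_left: "pbr (psub p q) r = psub (pbr p r) (pbr q r)"
  unfolding psub_def pbr_def
  by (rule ext) (simp add: pmult_diff_left pmult_diff_right algebra_simps)

lemma lnorm_psub: "lnorm (psub p q) xs = psub (lnorm p xs) (lnorm q xs)"
  by (induction xs arbitrary: p q) (simp_all add: pbr_psub_left)

lemma lnorm_append: "lnorm P (xs @ ys) = lnorm (lnorm P xs) ys"
  by (induction xs arbitrary: P) simp_all

lemma lnorm_lie: "P \<in> lie_polys \<Longrightarrow> lnorm P xs \<in> lie_polys"
  by (induction xs arbitrary: P) (simp_all add: lie_polys.lp_br lie_polys.lp_var)

lemma ti_psub: "p \<in> tideal S \<Longrightarrow> q \<in> tideal S \<Longrightarrow> psub p q \<in> tideal S"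
proof -
  assume a: "p \<in> tideal S" "q \<in> tideal S"
  have "psub p q = padd p (psmult (-1) q)" by (simp add: psub_def padd_def psmult_def)
  then show ?thesis using a by (simp add: tideal.ti_add tideal.ti_smult)
qed

lemma ti_br_left: "c \<in> tideal S \<Longrightarrow> P \<in> lie_polys \<Longrightarrow> pbr P c \<in> tideal S"
proof -
  assume a: "c \<in> tideal S" "P \<in> lie_polys"
  have "pbr P c = psmult (-1) (pbr c P)" by (simp add: pbr_def psmult_def)
  then show ?thesis using a by (simp add: tideal.ti_br tideal.ti_smult)
qed

lemma ti_lnorm: "c \<in> tideal S \<Longrightarrow> lnorm c xs \<in> tideal S"
  by (induction xs arbitrary: c) (simp_all add: tideal.ti_br lie_polys.lp_var)

definition cg :: "'a::field npoly set \<Rightarrow> 'a npoly \<Rightarrow> 'a npoly \<Rightarrow> bool" where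
  "cg S p q \<longleftrightarrow> psub p q \<in> tideal S"

lemma cg_refl: "cg S p p"
proof -
  have "psub p p = pzero" by (simp add: psub_def pzero_def)
  then show ?thesis by (simp add: cg_def tideal.ti_zero)
qed

lemma cg_sym: "cg S p q \<Longrightarrow> cg S q p"
proof -
  assume "cg S p q"
  moreover have "psub q p = psmult (-1) (psub p q)" by (simp add: psub_def psmult_def)
  ultimately show ?thesis by (simp add: cg_def tideal.ti_smult)
qed

lemma cg_trans: "cg S p q \<Longrightarrow> cg S q r \<Longrightarrow> cg S p r"
proof -
  assume "cg S p q" "cg S q r"
  moreover have "psub p r = padd (psub p q) (psub q r)" by (simp add: psub_def padd_def)
  ultimately show ?thesis by (simp add: cg_def tideal.ti_add)
qed

lemma cg_mem: "cg S p q \<Longrightarrow> q \<in> tideal S \<Longrightarrow> p \<in> tideal S"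
proof -
  assume "cg S p q" "q \<in> tideal S"
  moreover have "p = padd (psub p q) q" by (simp add: psub_def padd_def)
  ultimately show ?thesis by (metis cg_def tideal.ti_add)
qed

section \<open>The identity [y,y'] of UT_3\<close>

lemma dl_mult_term:
  assumes "k \<le> length w"
  shows "dl u (take k w) * dl v (drop k w) = (if k = length u \<and> w = u @ v then (1::'a::field) else 0)"
proof (cases "take k w = u \<and> drop k w = v")
  case True
  then have "w = u @ v" by (metis append_take_drop_id)
  moreover have "k = length u" using True assms by auto
  ultimately show ?thesis using True by (simp add: dl_def)
next
  case False
  then show ?thesis by (auto simp: dl_def)
qed

lemma pmult_dl: "pmult (dl u) (dl v) = (dl (u @ v) :: 'a::field npoly)"
proof
  fix w
  have "(pmult (dl u) (dl v) w :: 'a) = (\<Sum>k\<le>length w. if k = length u \<and> w = u @ v then (1::'a) else 0)"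
    unfolding pmult_def by (rule sum.cong) (simp_all add: dl_mult_term)
  also have "\<dots> = dl (u @ v) w"
    by (cases "w = u @ v") (simp_all add: dl_def)
  finally show "(pmult (dl u) (dl v) w :: 'a) = dl (u @ v) w" .
qed

lemma pvar_dl: "pvar x = dl [x]"
  by (simp add: pvar_def dl_def)

lemma diag_comm:
  fixes A B :: "'a::field mat3"
  assumes "ut3_comp 0 A" "ut3_comp 0 B"
  shows "mmult A (mmult B mone) = mmult B (mmult A mone)"
proof -
  have dA: "\<And>i j. A i j = (if i = j \<and> i < 3 then A i i else 0)"
    using assms(1) unfolding ut3_comp_def by (metis add_0_right)
  have dB: "\<And>i j. B i j = (if i = j \<and> i < 3 then B i i else 0)"
    using assms(2) unfolding ut3_comp_def by (metis add_0_right)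
  show ?thesis
  proof (intro ext)
    fix i j
    show "mmult A (mmult B mone) i j = mmult B (mmult A mone) i j"
      unfolding mmult_def mone_def numeral_3_eq_3
      apply (simp add: lessThan_Suc)
      apply (subst (1 2 3 4 5 6 7 8 9 10 11 12 13 14 15 16 17 18) dA)
      apply (subst (1 2 3 4 5 6 7 8 9 10 11 12 13 14 15 16 17 18) dB)
      apply auto
      done
  qed
qed

lemma yy_ident:
  assumes "vdeg a = 0" "vdeg b = 0"
  shows "pbr (pvar a) (pvar b) \<in> (ut3_ids :: 'a::field npoly set)"
proof -
  have e: "pbr (pvar a) (pvar b) = (\<lambda>w. dl [a,b] w - dl [b,a] w :: 'a)"
    by (simp add: pbr_def pvar_dl pmult_dl)
  have lie: "pbr (pvar a) (pvar b) \<in> (lie_polys :: 'a npoly set)"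
    by (simp add: lie_polys.lp_br lie_polys.lp_var)
  have "peval \<rho> (pbr (pvar a) (pvar b) :: 'a npoly) = (\<lambda>i j. 0)" if g: "graded_eval \<rho>" for \<rho>
  proof (cases "a = b")
    case True
    then show ?thesis unfolding e peval_def by simp
  next
    case False
    have s: "{u. dl [a,b] u - dl [b,a] u \<noteq> (0::'a)} = {[a,b],[b,a]}"
      using False by (auto simp: dl_def)
    have c: "mmult (\<rho> a) (mmult (\<rho> b) mone) = mmult (\<rho> b) (mmult (\<rho> a) mone)"
      using g assms unfolding graded_eval_def by (metis diag_comm)
    show ?thesis using False unfolding e peval_def s
      by (simp add: dl_def c)
  qed
  then show ?thesis using lie by (simp add: ut3_ids_def)
qed

section \<open>Reordering y's\<close>

lemma swap_cg:
  assumes "ut3_ids \<subseteq> S" "vdeg a = 0" "vdeg b = 0" "P \<in> lie_polys"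
  shows "cg S (lnorm P (a#b#w)) (lnorm P (b#a#w))"
proof -
  have "pbr (pvar a) (pvar b) \<in> tideal S"
    using yy_ident[OF assms(2,3)] assms(1) by (blast intro: tideal.ti_gen)
  then have "pbr P (pbr (pvar a) (pvar b)) \<in> tideal S"
    using assms(4) by (rule ti_br_left)
  then have "lnorm (psub (pbr (pbr P (pvar a)) (pvar b)) (pbr (pbr P (pvar b)) (pvar a))) w \<in> tideal S"
    by (simp add: jacobi ti_lnorm)
  then show ?thesis by (simp add: cg_def lnorm_psub)
qed

lemma move_cg:
  assumes "ut3_ids \<subseteq> S" "\<forall>x\<in>set u. vdeg x = 0" "vdeg y = 0" "P \<in> lie_polys"
  shows "cg S (lnorm P (u @ y # w)) (lnorm P (y # u @ w))"
  using assms(2,4)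
proof (induction u arbitrary: P)
  case Nil then show ?case by (simp add: cg_refl)
next
  case (Cons x r)
  have l: "pbr P (pvar x) \<in> lie_polys" using Cons.prems by (simp add: lie_polys.lp_br lie_polys.lp_var)
  have "cg S (lnorm (pbr P (pvar x)) (r @ y # w)) (lnorm (pbr P (pvar x)) (y # r @ w))"
    using Cons l by simp
  then have 1: "cg S (lnorm P (x # r @ y # w)) (lnorm P (x # y # r @ w))" by simp
  have 2: "cg S (lnorm P (x # y # r @ w)) (lnorm P (y # x # r @ w))"
    using swap_cg[OF assms(1)] Cons.prems assms(3) by simp
  show ?case using cg_trans[OF 1 2] by simp
qed

lemma perm_cg:
  assumes "ut3_ids \<subseteq> S" "\<forall>x\<in>set ys1. vdeg x = 0" "mset ys1 = mset ys2" "P \<in> lie_polys"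
  shows "cg S (lnorm P (ys1 @ zs)) (lnorm P (ys2 @ zs))"
  using assms(2,3,4)
proof (induction ys1 arbitrary: ys2 P)
  case Nil then show ?case by (simp add: cg_refl)
next
  case (Cons y r)
  have "y \<in> set ys2" using Cons.prems(2) by (metis list.set_intros(1) set_mset_mset)
  then obtain u v where uv: "ys2 = u @ y # v" by (meson split_list)
  have sy: "set ys2 = set (y # r)" using Cons.prems(2) by (metis set_mset_mset)
  have vu: "\<forall>x\<in>set u. vdeg x = 0" using Cons.prems(1) sy uv by auto
  have vy: "vdeg y = 0" using Cons.prems(1) by simp
  have mr: "mset r = mset (u @ v)" using Cons.prems(2) uv by simp
  have l: "pbr P (pvar y) \<in> lie_polys" using Cons.prems by (simp add: lie_polys.lp_br lie_polys.lp_var)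
  have 1: "cg S (lnorm P (y # r @ zs)) (lnorm P (y # u @ (v @ zs)))"
    using Cons.IH[OF _ mr l] Cons.prems(1) by simp
  have 2: "cg S (lnorm P (u @ y # (v @ zs))) (lnorm P (y # u @ (v @ zs)))"
    using move_cg[OF assms(1) vu vy Cons.prems(3)] .
  show ?case using cg_trans[OF 1 cg_sym[OF 2]] uv by simp
qed

section \<open>Substitution\<close>

definition fs :: "'a::field npoly \<Rightarrow> bool" where
  "fs p \<longleftrightarrow> finite {u. p u \<noteq> 0}"

lemma psubst_on:
  assumes "finite S" "{u. p u \<noteq> 0} \<subseteq> S"
  shows "psubst \<sigma> p w = (\<Sum>u\<in>S. p u * wprod \<sigma> u w)"
  unfolding psubst_def using assms by (intro sum.mono_neutral_left) auto

lemma fs_sum: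
  assumes "finite I" "\<forall>i\<in>I. fs (f i)"
  shows "fs (\<lambda>w. \<Sum>i\<in>I. c i * f i w)"
proof -
  have "{u. (\<Sum>i\<in>I. c i * f i u) \<noteq> 0} \<subseteq> (\<Union>i\<in>I. {u. f i u \<noteq> 0})"
    by (auto intro: ccontr simp: sum.neutral)
  moreover have "finite (\<Union>i\<in>I. {u. f i u \<noteq> 0})" using assms by (auto simp: fs_def)
  ultimately show ?thesis unfolding fs_def by (rule finite_subset)
qed

lemma fs_dl: "fs (dl u)"
proof -
  have "{w. dl u w \<noteq> 0} \<subseteq> {u}" by (auto simp: dl_def)
  then show ?thesis unfolding fs_def by (rule finite_subset) simp
qed

lemma fs_psub: "fs p \<Longrightarrow> fs q \<Longrightarrow> fs (psub p q)"
  unfolding fs_def psub_def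
  by (rule finite_subset[of _ "{u. p u \<noteq> 0} \<union> {u. q u \<noteq> 0}"]) auto

lemma fs_padd: "fs p \<Longrightarrow> fs q \<Longrightarrow> fs (padd p q)"
  unfolding fs_def padd_def
  by (rule finite_subset[of _ "{u. p u \<noteq> 0} \<union> {u. q u \<noteq> 0}"]) auto

lemma fs_psmult: "fs p \<Longrightarrow> fs (psmult c p)"
  unfolding fs_def psmult_def
  by (rule finite_subset[of _ "{u. p u \<noteq> 0}"]) auto

lemma supp_pmult: "{w. pmult p q w \<noteq> 0} \<subseteq> (\<lambda>(u,v). u @ v) ` ({u. p u \<noteq> 0} \<times> {u. q u \<noteq> 0})"
proof
  fix w assume "w \<in> {w. pmult p q w \<noteq> 0}"
  then have "\<exists>k. p (take k w) * q (drop k w) \<noteq> 0"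
    unfolding pmult_def by (metis (mono_tags, lifting) sum.neutral mem_Collect_eq)
  then obtain k where "p (take k w) * q (drop k w) \<noteq> 0" by blast
  then show "w \<in> (\<lambda>(u,v). u @ v) ` ({u. p u \<noteq> 0} \<times> {u. q u \<noteq> 0})"
    by (intro image_eqI[of _ _ "(take k w, drop k w)"]) auto
qed

lemma fs_pmult: "fs p \<Longrightarrow> fs q \<Longrightarrow> fs (pmult p q)"
  unfolding fs_def by (rule finite_subset[OF supp_pmult]) auto

lemma fs_pbr: "fs p \<Longrightarrow> fs q \<Longrightarrow> fs (pbr p q)"
proof -
  assume "fs p" "fs q"
  then have "fs (psub (pmult p q) (pmult q p))" by (simp add: fs_psub fs_pmult)
  moreover have "pbr p q = psub (pmult p q) (pmult q p)" by (simp add: pbr_def psub_def)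
  ultimately show ?thesis by simp
qed

lemma fs_pvar: "fs (pvar x)" by (simp add: pvar_dl fs_dl)

lemma fs_lie: "p \<in> lie_polys \<Longrightarrow> fs p"
proof (induction rule: lie_polys.induct)
  case (lp_var x) then show ?case by (rule fs_pvar)
next
  case lp_zero then show ?case by (simp add: fs_def pzero_def)
next
  case (lp_add p q) then show ?case by (simp add: fs_padd)
next
  case (lp_smult p c) then show ?case by (simp add: fs_psmult)
next
  case (lp_br p q) then show ?case by (simp add: fs_pbr)
qed

lemma dec:
  assumes "{u. p u \<noteq> 0} \<subseteq> S" "finite S"
  shows "(\<lambda>w. \<Sum>u\<in>S. p u * dl u w) = p"
proof
  fix w
  have "(\<Sum>u\<in>S. p u * dl u w) = (\<Sum>u\<in>S. if u = w then p w else 0)"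
    by (rule sum.cong) (auto simp: dl_def)
  also have "\<dots> = p w" using assms by (auto simp: sum.delta')
  finally show "(\<Sum>u\<in>S. p u * dl u w) = p w" .
qed

lemma pmult_sum_left:
  "pmult (\<lambda>w. \<Sum>i\<in>I. c i * f i w) r w = (\<Sum>i\<in>I. c i * pmult (f i) r w)"
  unfolding pmult_def
  by (simp add: sum_distrib_left sum_distrib_right mult.assoc sum.swap[of _ I])

lemma pmult_sum_right:
  "pmult r (\<lambda>w. \<Sum>i\<in>I. c i * f i w) w = (\<Sum>i\<in>I. c i * pmult r (f i) w)"
  unfolding pmult_def
  by (simp add: sum_distrib_left sum_distrib_right mult.left_commute sum.swap[of _ I])

lemma psubst_sum:
  assumes "finite I" "\<forall>i\<in>I. fs (f i)"
  shows "psubst \<sigma> (\<lambda>w. \<Sum>i\<in>I. c i * f i w) w = (\<Sum>i\<in>I. c i * psubst \<sigma> (f i) w)"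
proof -
  define U where "U = (\<Union>i\<in>I. {u. f i u \<noteq> 0})"
  have fU: "finite U" using assms by (auto simp: U_def fs_def)
  have sU: "{u. (\<Sum>i\<in>I. c i * f i u) \<noteq> 0} \<subseteq> U"
    unfolding U_def by (auto intro: ccontr simp: sum.neutral)
  have "psubst \<sigma> (\<lambda>w. \<Sum>i\<in>I. c i * f i w) w = (\<Sum>u\<in>U. (\<Sum>i\<in>I. c i * f i u) * wprod \<sigma> u w)"
    using psubst_on[OF fU sU] by simp
  also have "\<dots> = (\<Sum>i\<in>I. c i * (\<Sum>u\<in>U. f i u * wprod \<sigma> u w))"
    by (simp add: sum_distrib_left sum_distrib_right mult.assoc sum.swap[of _ I])
  also have "\<dots> = (\<Sum>i\<in>I. c i * psubst \<sigma> (f i) w)"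
  proof (rule sum.cong)
    fix i assume "i \<in> I"
    then have sb: "{u. f i u \<noteq> 0} \<subseteq> U" by (auto simp: U_def)
    show "c i * (\<Sum>u\<in>U. f i u * wprod \<sigma> u w) = c i * psubst \<sigma> (f i) w"
      using psubst_on[OF fU sb] by simp
  qed simp
  finally show ?thesis .
qed

lemma psubst_dl: "psubst \<sigma> (dl u) = wprod \<sigma> u"
proof
  fix w
  have "psubst \<sigma> (dl u) w = (\<Sum>v\<in>{u}. dl u v * wprod \<sigma> v w)"
    by (rule psubst_on) (auto simp: dl_def)
  then show "psubst \<sigma> (dl u) w = wprod \<sigma> u w" by (simp add: dl_def)
qed

lemma pmult_pone_left: "pmult pone q = q"
proof
  fix w show "pmult pone q w = q w"
  proof (cases w)
    case Nil then show ?thesis by (simp add: pmult_Nil pone_def)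
  next
    case (Cons x w')
    have "pmult (\<lambda>u. pone (x # u)) q w' = 0" by (simp add: pmult_def pone_def)
    then show ?thesis using Cons by (simp add: pmult_Cons pone_def)
  qed
qed

lemma pmult_pone_right: "pmult p pone = p"
proof
  fix w
  have "pmult p pone w = (\<Sum>k\<le>length w. if k = length w then p w else 0)"
    unfolding pmult_def by (rule sum.cong) (auto simp: pone_def)
  then show "pmult p pone w = p w" by simp
qed

lemma wprod_append: "wprod \<sigma> (u @ v) = pmult (wprod \<sigma> u) (wprod \<sigma> v)"
  by (induction u) (simp_all add: wprod_def pmult_pone_left pmult_assoc)

lemma psubst_fun:
  assumes "fs p"
  shows "psubst \<sigma> p = (\<lambda>w. \<Sum>u\<in>{u. p u \<noteq> 0}. p u * wprod \<sigma> u w)"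
  using assms by (intro ext psubst_on) (auto simp: fs_def)

lemma psubst_pmult:
  assumes "fs p" "fs q"
  shows "psubst \<sigma> (pmult p q) = pmult (psubst \<sigma> p) (psubst \<sigma> q)"
proof
  fix w
  define Sp where "Sp = {u. p u \<noteq> 0}"
  define Sq where "Sq = {u. q u \<noteq> 0}"
  have fp: "finite Sp" and fq: "finite Sq" using assms by (auto simp: fs_def Sp_def Sq_def)
  have dp: "(\<lambda>w. \<Sum>u\<in>Sp. p u * dl u w) = p" by (rule dec[OF _ fp]) (simp add: Sp_def)
  have dq: "(\<lambda>w. \<Sum>u\<in>Sq. q u * dl u w) = q" by (rule dec[OF _ fq]) (simp add: Sq_def)
  have pm: "pmult p q = (\<lambda>w. \<Sum>u\<in>Sp. p u * (\<lambda>w. \<Sum>v\<in>Sq. q v * dl (u @ v) w) w)"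
  proof
    fix w
    have "pmult p q w = pmult (\<lambda>w. \<Sum>u\<in>Sp. p u * dl u w) (\<lambda>w. \<Sum>u\<in>Sq. q u * dl u w) w"
      by (simp add: dp dq)
    also have "\<dots> = (\<Sum>u\<in>Sp. p u * (\<Sum>v\<in>Sq. q v * dl (u @ v) w))"
      by (simp add: pmult_sum_left pmult_sum_right pmult_dl)
    finally show "pmult p q w = (\<lambda>w. \<Sum>u\<in>Sp. p u * (\<lambda>w. \<Sum>v\<in>Sq. q v * dl (u @ v) w) w) w"
      by simp
  qed
  have fsi: "\<forall>u\<in>Sp. fs (\<lambda>w. \<Sum>v\<in>Sq. q v * dl (u @ v) w)"
    using fq by (simp add: fs_sum fs_dl)
  have "psubst \<sigma> (pmult p q) w = (\<Sum>u\<in>Sp. p u * (\<Sum>v\<in>Sq. q v * wprod \<sigma> (u @ v) w))"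
    unfolding pm using fp fq fsi by (simp add: psubst_sum fs_dl psubst_dl)
  also have "\<dots> = pmult (\<lambda>w. \<Sum>u\<in>Sp. p u * wprod \<sigma> u w) (\<lambda>w. \<Sum>v\<in>Sq. q v * wprod \<sigma> v w) w"
    by (simp add: pmult_sum_left pmult_sum_right wprod_append)
  also have "\<dots> = pmult (psubst \<sigma> p) (psubst \<sigma> q) w"
    using assms by (simp add: psubst_fun Sp_def Sq_def)
  finally show "psubst \<sigma> (pmult p q) w = pmult (psubst \<sigma> p) (psubst \<sigma> q) w" .
qed

lemma psubst_psub:
  assumes "fs p" "fs q"
  shows "psubst \<sigma> (psub p q) = psub (psubst \<sigma> p) (psubst \<sigma> q)"
proof
  fix w
  define U where "U = {u. p u \<noteq> 0} \<union> {u. q u \<noteq> 0}"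
  have fU: "finite U" using assms by (simp add: U_def fs_def)
  have sub: "{u. psub p q u \<noteq> 0} \<subseteq> U" by (auto simp: U_def psub_def)
  have "psubst \<sigma> (psub p q) w = (\<Sum>u\<in>U. (p u - q u) * wprod \<sigma> u w)"
    using psubst_on[OF fU sub] by (simp add: psub_def)
  also have "\<dots> = (\<Sum>u\<in>U. p u * wprod \<sigma> u w) - (\<Sum>u\<in>U. q u * wprod \<sigma> u w)"
    by (simp add: sum_subtractf algebra_simps)
  also have "\<dots> = psub (psubst \<sigma> p) (psubst \<sigma> q) w"
    using psubst_on[OF fU, of p] psubst_on[OF fU, of q] by (auto simp: U_def psub_def)
  finally show "psubst \<sigma> (psub p q) w = psub (psubst \<sigma> p) (psubst \<sigma> q) w" .
qed

lemma psubst_pbr: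
  assumes "fs p" "fs q"
  shows "psubst \<sigma> (pbr p q) = pbr (psubst \<sigma> p) (psubst \<sigma> q)"
proof -
  have "pbr p q = psub (pmult p q) (pmult q p)" by (simp add: pbr_def psub_def)
  then show ?thesis using assms
    by (simp add: psubst_psub fs_pmult psubst_pmult) (simp add: pbr_def psub_def)
qed

lemma psubst_pvar: "psubst \<sigma> (pvar x) = \<sigma> x"
  by (simp add: pvar_dl psubst_dl wprod_def pmult_pone_right)

lemma psubst_lnorm:
  assumes "fs p" "\<forall>x\<in>set xs. \<sigma> x = pvar (\<tau> x)"
  shows "psubst \<sigma> (lnorm p xs) = lnorm (psubst \<sigma> p) (map \<tau> xs)"
  using assms
proof (induction xs arbitrary: p)
  case Nil then show ?case by simp
next
  case (Cons x xs)
  have "fs (pbr p (pvar x))" using Cons.prems by (simp add: fs_pbr fs_pvar)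
  then show ?case using Cons by (simp add: psubst_pbr fs_pvar psubst_pvar)
qed

lemma wdeg_append: "wdeg (u @ v) = (wdeg u + wdeg v) mod 3"
  by (simp add: wdeg_def mod_add_eq)

lemma homog_pmult: "homog d p \<Longrightarrow> homog e q \<Longrightarrow> homog ((d + e) mod 3) (pmult p q)"
proof -
  assume hp: "homog d p" and hq: "homog e q"
  show ?thesis unfolding homog_def
  proof (intro allI impI)
    fix w assume "pmult p q w \<noteq> 0"
    then have "w \<in> (\<lambda>(u,v). u @ v) ` ({u. p u \<noteq> 0} \<times> {u. q u \<noteq> 0})"
      using supp_pmult[of p q] by blast
    then obtain u v where "w = u @ v" "p u \<noteq> 0" "q v \<noteq> 0" by auto
    then show "wdeg w = (d + e) mod 3" using hp hq by (simp add: homog_def wdeg_append)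
  qed
qed

lemma homog_pbr0:
  assumes "homog d p" "homog 0 q" "d < 3"
  shows "homog d (pbr p q)"
proof -
  have 1: "homog d (pmult p q)" using homog_pmult[OF assms(1,2)] assms(3) by simp
  have 2: "homog d (pmult q p)" using homog_pmult[OF assms(2,1)] assms(3) by simp
  show ?thesis using 1 2 unfolding homog_def pbr_def by (metis diff_self diff_zero)
qed

lemma vdeg_lt3: "vdeg x < 3" by (cases x) simp_all

lemma homog_pvar: "homog (vdeg x) (pvar x)"
  using vdeg_lt3[of x] by (simp add: homog_def pvar_def wdeg_def)

lemma homog_lnorm:
  "homog d P \<Longrightarrow> d < 3 \<Longrightarrow> \<forall>x\<in>set xs. vdeg x = 0 \<Longrightarrow> homog d (lnorm P xs)"
proof (induction xs arbitrary: P)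
  case Nil then show ?case by simp
next
  case (Cons x xs)
  have "homog d (pbr P (pvar x))"
    using homog_pbr0[OF Cons.prems(1) _ Cons.prems(2)] homog_pvar[of x] Cons.prems(3) by simp
  then show ?case using Cons.IH[of "pbr P (pvar x)"] Cons.prems(2,3) by simp
qed

lemma count_blk:
  "count (mset (concat (map (\<lambda>i. replicate (c i) (Y (Suc (\<psi> i)))) [0..<n]))) x
   = (\<Sum>i<n. if x = Y (Suc (\<psi> i)) then c i else 0)"
proof (induction n)
  case 0 then show ?case by simp
next
  case (Suc n)
  have "count (mset (concat (map (\<lambda>i. replicate (c i) (Y (Suc (\<psi> i)))) [0..<Suc n]))) x
    = count (mset (concat (map (\<lambda>i. replicate (c i) (Y (Suc (\<psi> i)))) [0..<n]))) x
      + count (mset (replicate (c n) (Y (Suc (\<psi> n))))) x"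
    by simp
  also have "count (mset (replicate (c n) (Y (Suc (\<psi> n))))) x = (if x = Y (Suc (\<psi> n)) then c n else 0)"
    by (simp only: mset_replicate count_replicate_mset)
  finally show ?case using Suc by simp
qed
lemma ys_block_eq: "ys_block as = concat (map (\<lambda>i. replicate (as ! i) (Y (Suc i))) [0..<length as])"
  by (simp add: ys_block_def)

lemma blk_sub:
  assumes "length bs = m" "inj_on \<phi> {..<n}" "\<forall>i<n. \<phi> i < m \<and> c i \<le> bs ! (\<phi> i)"
  shows "mset (concat (map (\<lambda>i. replicate (c i) (Y (Suc (\<phi> i)))) [0..<n])) \<subseteq># mset (ys_block bs)"
  unfolding subseteq_mset_def
proof
  fix x
  have "(\<Sum>i<n. if x = Y (Suc (\<phi> i)) then c i else 0) \<le> (\<Sum>i<n. if x = Y (Suc (\<phi> i)) then bs ! (\<phi> i) else 0)"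
    using assms(3) by (intro sum_mono) auto
  also have "\<dots> = (\<Sum>j\<in>\<phi> ` {..<n}. if x = Y (Suc j) then bs ! j else 0)"
    using sum.reindex[OF assms(2), of "\<lambda>j. if x = Y (Suc j) then bs ! j else 0"] by simp
  also have "\<dots> \<le> (\<Sum>j<m. if x = Y (Suc j) then bs ! j else 0)"
    using assms(3) by (intro sum_mono2) auto
  also have "\<dots> = count (mset (ys_block bs)) x"
    using count_blk[of "\<lambda>i. bs ! i" "\<lambda>i. i" m x] assms(1) by (simp add: ys_block_def)
  finally show "count (mset (concat (map (\<lambda>i. replicate (c i) (Y (Suc (\<phi> i)))) [0..<n]))) x
      \<le> count (mset (ys_block bs)) x"
    by (simp only: count_blk)
qed

lemma ys_block_vdeg: "\<forall>x\<in>set (ys_block as). vdeg x = 0"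
  by (auto simp: ys_block_def)

lemma map_tau_blk:
  assumes "\<forall>i<n. \<tau> (Y (Suc i)) = Y (Suc (\<phi> i))" "length as = n"
  shows "map \<tau> (ys_block as) = concat (map (\<lambda>i. replicate (as ! i) (Y (Suc (\<phi> i)))) [0..<n])"
  unfolding ys_block_def map_concat map_map assms(2)[symmetric]
proof (rule arg_cong[where f=concat], rule map_cong)
  fix i assume "i \<in> set [0..<length as]"
  then show "(map \<tau> \<circ> (\<lambda>i. replicate (as ! i) (Y (Suc i)))) i = replicate (as ! i) (Y (Suc (\<phi> i)))"
    using assms by simp
qed simp

theorem mainTheorem7:
  fixes z1 z2 :: var and V V' :: "(nat \<times> nat) list"
  assumes "infinite (UNIV :: 'a::field set)"
    and "vdeg z1 = 1" and "vdeg z2 = 1" and "z1 \<noteq> z2"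
    and "ble V V'"
  shows "(bcomm z1 z2 V' :: 'a npoly) \<in> tideal ({bcomm z1 z2 V} \<union> ut3_ids)"
proof -
  define S where "S = ({bcomm z1 z2 V} \<union> ut3_ids :: 'a npoly set)"
  have uS: "ut3_ids \<subseteq> S" by (auto simp: S_def)
  define n where "n = length V"
  define m where "m = length V'"
  obtain \<phi> where smo: "strict_mono_on {..<n} \<phi>" and ph: "\<forall>i<n. \<phi> i < m \<and>
         fst (V ! i) \<le> fst (V' ! \<phi> i) \<and> snd (V ! i) \<le> snd (V' ! \<phi> i)"
    using assms(5) unfolding ble_def n_def m_def by blast
  have inj: "inj_on \<phi> {..<n}" using smo by (rule strict_mono_on_imp_inj_on)
  define \<tau> where "\<tau> = (\<lambda>x. case x of Y k \<Rightarrow> if 0 < k \<and> k - 1 < n then Y (Suc (\<phi> (k - 1))) else Y k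
                                | Z k \<Rightarrow> Z k | W k \<Rightarrow> W k)"
  have tY: "\<forall>i<n. \<tau> (Y (Suc i)) = Y (Suc (\<phi> i))" by (simp add: \<tau>_def)
  have tdeg: "vdeg (\<tau> x) = vdeg x" for x by (cases x) (simp_all add: \<tau>_def)
  obtain k1 where z1: "z1 = Z k1" using assms(2) by (cases z1) auto
  obtain k2 where z2: "z2 = Z k2" using assms(3) by (cases z2) auto
  have tz2: "\<tau> z2 = z2" by (simp add: \<tau>_def z2)
  define A where "A = ys_block (map fst V)"
  define B where "B = ys_block (map snd V)"
  define A' where "A' = ys_block (map fst V')"
  define B' where "B' = ys_block (map snd V')"
  have vA: "\<forall>x\<in>set A. vdeg x = 0" and vB: "\<forall>x\<in>set B. vdeg x = 0"
    and vA': "\<forall>x\<in>set A'. vdeg x = 0" and vB': "\<forall>x\<in>set B'. vdeg x = 0"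
    by (simp_all add: A_def B_def A'_def B'_def ys_block_vdeg)
  have lf: "length (map fst V) = n" and ls: "length (map snd V) = n" by (simp_all add: n_def)
  have subA: "mset (map \<tau> A) \<subseteq># mset A'"
    unfolding A_def A'_def map_tau_blk[OF tY lf]
    using ph by (intro blk_sub[OF _ inj]) (auto simp: n_def m_def)
  have subB: "mset (map \<tau> B) \<subseteq># mset B'"
    unfolding B_def B'_def map_tau_blk[OF tY ls]
    using ph by (intro blk_sub[OF _ inj]) (auto simp: n_def m_def)
  obtain D where D: "mset D = mset A' - mset (map \<tau> A)" using ex_mset by blast
  obtain E where E: "mset E = mset B' - mset (map \<tau> B)" using ex_mset by blast
  have mA: "mset A' = mset (D @ map \<tau> A)" using D subA by (simp add: subset_mset.diff_add)
  have mB: "mset B' = mset (map \<tau> B @ E)" using E subB by (simp add: subset_mset.diff_add add.commute)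
  have vD: "\<forall>x\<in>set D. vdeg x = 0"
  proof
    fix x assume "x \<in> set D"
    then have "x \<in># mset A' - mset (map \<tau> A)" using D by (metis set_mset_mset)
    then have "x \<in># mset A'" by (rule in_diffD)
    then have "x \<in> set A'" by simp
    then show "vdeg x = 0" using vA' by blast
  qed
  define \<sigma> where "\<sigma> = (\<lambda>x. if x = z1 then lnorm (pvar z1) D else (pvar (\<tau> x) :: 'a npoly))"
  have ge: "graded_endo \<sigma>"
    unfolding graded_endo_def
  proof
    fix x show "\<sigma> x \<in> lie_polys \<and> homog (vdeg x) (\<sigma> x)"
    proof (cases "x = z1")
      case True
      have "homog (vdeg z1) (lnorm (pvar z1) D :: 'a npoly)"
        using homog_lnorm[OF homog_pvar[of z1] vdeg_lt3 vD] .
      then show ?thesis using True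
        by (simp add: \<sigma>_def lnorm_lie lie_polys.lp_var)
    next
      case False
      then show ?thesis using homog_pvar[of "\<tau> x"]
        by (simp add: \<sigma>_def lie_polys.lp_var tdeg)
    qed
  qed
  have f_def: "bcomm z1 z2 V = (lnorm (pvar z1) (A @ [z2] @ B) :: 'a npoly)"
    by (simp add: bcomm_def A_def B_def)
  have g_def: "bcomm z1 z2 V' = (lnorm (pvar z1) (A' @ [z2] @ B') :: 'a npoly)"
    by (simp add: bcomm_def A'_def B'_def)
  have fT: "bcomm z1 z2 V \<in> tideal S" by (simp add: S_def tideal.ti_gen)
  have sv: "\<forall>x\<in>set (A @ [z2] @ B). \<sigma> x = pvar (\<tau> x)"
  proof
    fix x assume "x \<in> set (A @ [z2] @ B)"
    then have "x \<noteq> z1" using vA vB assms(2,4) by auto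
    then show "\<sigma> x = pvar (\<tau> x)" by (simp add: \<sigma>_def)
  qed
  have "psubst \<sigma> (bcomm z1 z2 V) = lnorm (psubst \<sigma> (pvar z1)) (map \<tau> (A @ [z2] @ B))"
    unfolding f_def by (rule psubst_lnorm[OF fs_pvar sv])
  also have "\<dots> = lnorm (pvar z1) (D @ map \<tau> A @ [z2] @ map \<tau> B)"
    by (simp add: psubst_pvar \<sigma>_def tz2 lnorm_append)
  finally have e1: "psubst \<sigma> (bcomm z1 z2 V) = lnorm (pvar z1) (D @ map \<tau> A @ [z2] @ map \<tau> B)" .
  have hT: "lnorm (pvar z1) ((D @ map \<tau> A @ [z2]) @ (map \<tau> B @ E)) \<in> tideal S"
  proof -
    have "psubst \<sigma> (bcomm z1 z2 V) \<in> tideal S" using fT ge by (rule tideal.ti_subst)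
    then have "lnorm (psubst \<sigma> (bcomm z1 z2 V)) E \<in> tideal S" by (rule ti_lnorm)
    then show ?thesis using e1 by (simp add: lnorm_append)
  qed
  have P0: "(pvar z1 :: 'a npoly) \<in> lie_polys" by (rule lie_polys.lp_var)
  have c1: "cg S (lnorm (pvar z1) (A' @ ([z2] @ B'))) (lnorm (pvar z1) ((D @ map \<tau> A) @ ([z2] @ B')))"
    by (rule perm_cg[OF uS vA' mA P0])
  have c2: "cg S (lnorm (lnorm (pvar z1) (D @ map \<tau> A @ [z2])) (B' @ []))
                 (lnorm (lnorm (pvar z1) (D @ map \<tau> A @ [z2])) ((map \<tau> B @ E) @ []))"
    by (rule perm_cg[OF uS vB' mB lnorm_lie[OF P0]])
  have "cg S (bcomm z1 z2 V') (lnorm (pvar z1) ((D @ map \<tau> A @ [z2]) @ (map \<tau> B @ E)))"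
    using cg_trans[OF c1] c2 unfolding g_def by (simp add: lnorm_append)
  then show ?thesis using hT cg_mem unfolding S_def by blast
qed

end
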